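(* For every constant $\epsilon<\frac12$ the following holds. There is no pair of maps $g_r,g_c$, where $g_r$ assigns to each row payoff matrix $R\in[0,1]^{n\times n}$ a mixed strategy over rows and $g_c$ assigns to each pair $(R,C)$ of matrices in $[0,1]^{n\times n}$ a mixed strategy over columns, such that for every $n$ and every bimatrix game $(R,C)$ the profile $(g_r(R),g_c(R,C))$ is an $\epsilon$-approximate Nash equilibrium. In other words, with unlimited one-way communication (from the row player to the column player only) it is impossible to guarantee an $\epsilon$-approximate Nash equilibrium for any constant $\epsilon<\frac12$.
   Context: A bimatrix game $(R,C)$ has payoff matrices with entries in $[0,1]$ for the row and column player; mixed strategies $\mathbf{x},\mathbf{y}$ give payoffs $\mathbf{x}^TR\mathbf{y}$ and $\mathbf{x}^TC\mathbf{y}$. $(\mathbf{x},\mathbf{y})$ is an $\epsilon$-approximate Nash equilibrium if for all pure strategies $i$: $\mathbf{e}_i^TR\mathbf{y}\le\mathbf{x}^TR\mathbf{y}+\epsilon$ and $\mathbf{x}^TC\mathbf{e}_i\le\mathbf{x}^TC\mathbf{y}+\epsilon$. In one-way communication the row player may send information to the column player but receives none, so his output depends only on $R$, while the column player's output may depend on $C$ and on everything the row player sends (hence, with unlimited communication, on all of $R$). *)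

theory Defs
  imports "HOL-Analysis.Analysis"
begin

(* An n x n matrix is represented as a function nat => nat => real, only the entries
   with indices in {..<n} are relevant. *)

definition payoff_matrix :: "nat \<Rightarrow> (nat \<Rightarrow> nat \<Rightarrow> real) \<Rightarrow> bool" where
  "payoff_matrix n M \<longleftrightarrow> (\<forall>i<n. \<forall>j<n. 0 \<le> M i j \<and> M i j \<le> 1)"

definition mixed_strategy :: "nat \<Rightarrow> (nat \<Rightarrow> real) \<Rightarrow> bool" where
  "mixed_strategy n x \<longleftrightarrow> (\<forall>i. 0 \<le> x i) \<and> (\<forall>i\<ge>n. x i = 0) \<and> (\<Sum>i<n. x i) = 1"

definition payoff :: "nat \<Rightarrow> (nat \<Rightarrow> real) \<Rightarrow> (nat \<Rightarrow> nat \<Rightarrow> real) \<Rightarrow> (nat \<Rightarrow> real) \<Rightarrow> real" where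
  "payoff n x M y = (\<Sum>i<n. \<Sum>j<n. x i * M i j * y j)"

definition pure :: "nat \<Rightarrow> nat \<Rightarrow> real" where
  "pure i = (\<lambda>k. if k = i then 1 else 0)"

definition approx_NE ::
  "real \<Rightarrow> nat \<Rightarrow> (nat \<Rightarrow> nat \<Rightarrow> real) \<Rightarrow> (nat \<Rightarrow> nat \<Rightarrow> real) \<Rightarrow> (nat \<Rightarrow> real) \<Rightarrow> (nat \<Rightarrow> real) \<Rightarrow> bool" where
  "approx_NE \<epsilon> n R C x y \<longleftrightarrow>
     (\<forall>i<n. payoff n (pure i) R y \<le> payoff n x R y + \<epsilon>) \<and>
     (\<forall>i<n. payoff n x C (pure i) \<le> payoff n x C y + \<epsilon>)"

end

theory Submission
  imports Defs
begin

lemma dom_set: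
  fixes y :: "nat \<Rightarrow> real"
  assumes "finite A" "s \<le> card A"
  shows "\<exists>T\<subseteq>A. card T = s \<and> (\<forall>a\<in>T. \<forall>b\<in>A-T. y b \<le> y a)"
  using assms(2)
proof (induction s)
  case 0 then show ?case by auto
next
  case (Suc s)
  then obtain T where T: "T \<subseteq> A" "card T = s" "\<forall>a\<in>T. \<forall>b\<in>A-T. y b \<le> y a" by auto
  have fin: "finite (A - T)" using assms(1) by auto
  have fT0: "finite T" using T(1) assms(1) finite_subset by blast
  have ne: "A - T \<noteq> {}"
  proof
    assume "A - T = {}" then have "A \<subseteq> T" by blast
    then have "card A \<le> card T" using card_mono[OF fT0] by blast
    then show False using Suc.prems T(2) by simp
  qed
  have "Max (y`(A-T)) \<in> y`(A-T)" by (rule Max_in) (use fin ne in auto)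
  then obtain b0 where b0a: "b0 \<in> A-T" "y b0 = Max (y`(A-T))" by auto
  have b0: "b0 \<in> A - T" "\<forall>b\<in>A-T. y b \<le> y b0"
    using b0a fin by auto
  have fT: "finite T" using T(1) assms(1) finite_subset by blast
  show ?case
  proof (intro exI[of _ "insert b0 T"] conjI)
    show "insert b0 T \<subseteq> A" using b0 T by auto
    show "card (insert b0 T) = Suc s" using b0 T fT by auto
    show "\<forall>a\<in>insert b0 T. \<forall>b\<in>A - insert b0 T. y b \<le> y a" using b0 T by auto
  qed
qed

lemma top_set:
  fixes y :: "nat \<Rightarrow> real"
  assumes "finite A" "\<forall>c\<in>A. 0 \<le> y c"
  shows "\<exists>T \<beta>. T \<subseteq> A \<and> card T \<le> s \<and> 0 \<le> \<beta> \<and> (\<forall>a\<in>T. \<beta> \<le> y a) \<and> (\<forall>b\<in>A-T. y b \<le> \<beta>)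
          \<and> real (s+1) * (\<beta> * (real (s+1) - real (card T))) \<le> sum y A"
proof (cases "card A \<le> s")
  case True
  then show ?thesis using assms
    by (intro exI[of _ A] exI[of _ 0]) (auto intro: sum_nonneg)
next
  case False
  then obtain T where T: "T \<subseteq> A" "card T = s" "\<forall>a\<in>T. \<forall>b\<in>A-T. y b \<le> y a"
    using dom_set[OF assms(1), of s y] by auto
  have fin: "finite (A - T)" using assms(1) by auto
  have fT0: "finite T" using T(1) assms(1) finite_subset by blast
  have ne: "A - T \<noteq> {}"
  proof
    assume "A - T = {}" then have "A \<subseteq> T" by blast
    then have "card A \<le> card T" using card_mono[OF fT0] by blast
    then show False using False T(2) by simp
  qed
  have "Max (y`(A-T)) \<in> y`(A-T)" by (rule Max_in) (use fin ne in auto)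
  then obtain b0 where b0a: "b0 \<in> A-T" "y b0 = Max (y`(A-T))" by auto
  have b0: "b0 \<in> A - T" "\<forall>b\<in>A-T. y b \<le> y b0"
    using b0a fin by auto
  have fT: "finite T" using T(1) assms(1) finite_subset by blast
  have "real (s+1) * y b0 = (\<Sum>c\<in>insert b0 T. y b0)" using b0 T fT by auto
  also have "\<dots> \<le> (\<Sum>c\<in>insert b0 T. y c)"
    using T b0 by (intro sum_mono) auto
  also have "\<dots> \<le> sum y A"
    using T b0 assms by (intro sum_mono2) auto
  finally have "real (s+1) * y b0 \<le> sum y A" .
  then show ?thesis using T b0 assms
    by (intro exI[of _ T] exI[of _ "y b0"]) auto
qed


lemma payoff_pure_right:
  "j < n \<Longrightarrow> payoff n x M (pure j) = (\<Sum>i<n. x i * M i j)"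
  unfolding payoff_def pure_def by (simp add: if_distrib cong: if_cong)

lemma payoff_pure_left:
  assumes "i < n" shows "payoff n (pure i) M y = (\<Sum>j<n. M i j * y j)"
proof -
  have "payoff n (pure i) M y = (\<Sum>ia<n. if ia = i then (\<Sum>j<n. M ia j * y j) else 0)"
    unfolding payoff_def pure_def by (intro sum.cong) auto
  then show ?thesis using assms by simp
qed

lemma sum_ind_card:
  assumes "S \<subseteq> B" "finite B"
  shows "(\<Sum>c\<in>B. (if c \<in> S then 1 else 0::real)) = real (card S)"
proof -
  have "(\<Sum>c\<in>B. (if c \<in> S then 1 else 0::real)) = (\<Sum>c\<in>B \<inter> S. 1)"
    using assms by (simp add: sum.If_cases)
  also have "B \<inter> S = S" using assms by auto
  finally show ?thesis by simp
qed

theorem theorem3: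
  fixes \<epsilon> :: real
  assumes "\<epsilon> < 1/2"
  shows "\<not> (\<exists>(g_r :: nat \<Rightarrow> (nat \<Rightarrow> nat \<Rightarrow> real) \<Rightarrow> (nat \<Rightarrow> real))
               (g_c :: nat \<Rightarrow> (nat \<Rightarrow> nat \<Rightarrow> real) \<Rightarrow> (nat \<Rightarrow> nat \<Rightarrow> real) \<Rightarrow> (nat \<Rightarrow> real)).
            \<forall>n R C. n \<ge> 1 \<longrightarrow> payoff_matrix n R \<longrightarrow> payoff_matrix n C \<longrightarrow>
              mixed_strategy n (g_r n R) \<and> mixed_strategy n (g_c n R C) \<and>
              approx_NE \<epsilon> n R C (g_r n R) (g_c n R C))"
proof
  assume "\<exists>g_r g_c. \<forall>n R C. n \<ge> 1 \<longrightarrow> payoff_matrix n R \<longrightarrow> payoff_matrix n C \<longrightarrow>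
              mixed_strategy n (g_r n R) \<and> mixed_strategy n (g_c n R C) \<and>
              approx_NE \<epsilon> n R C (g_r n R) (g_c n R C)"
  then obtain g_r g_c where H: "\<And>n R C. n \<ge> 1 \<Longrightarrow> payoff_matrix n R \<Longrightarrow> payoff_matrix n C \<Longrightarrow>
              mixed_strategy n (g_r n R) \<and> mixed_strategy n (g_c n R C) \<and>
              approx_NE \<epsilon> n R C (g_r n R) (g_c n R C)" by blast
  define a where "a = 1 - 2*\<epsilon>"
  have a: "a > 0" using assms a_def by simp
  obtain t :: nat where t: "2/a < real t" using reals_Archimedean2 by blast
  have t0: "real t > 0" using t a by (smt (verit) divide_pos_pos)
  hence t1: "t \<ge> 1" by simp
  obtain m :: nat where m: "4 * real t / a < real m" using reals_Archimedean2 by blast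
  have m0: "real m > 0" using m a t0 by (smt (verit) divide_pos_pos)
  have tm: "real t / real m < a/4"
    using m m0 a t0 by (simp add: field_simps)
  have et: "\<epsilon> / real t < a/4"
  proof -
    have "\<epsilon> / real t \<le> (1/2) / real t" by (intro divide_right_mono) (use assms t0 in auto)
    also have "\<dots> < a/4" using t a t0 by (simp add: field_simps)
    finally show ?thesis .
  qed
  define D where "D = {S. S \<subseteq> {..<m} \<and> card S \<le> t}"
  have finD: "finite D" unfolding D_def by (rule finite_subset[of _ "Pow {..<m}"]) auto
  define n where "n = card D"
  obtain h where h: "bij_betw h {0..<n} D" using ex_bij_betw_nat_finite[OF finD] n_def by blast
  have mn: "m \<le> n"
  proof -
    have "inj_on (\<lambda>c. {c}) {..<m}" by (auto simp: inj_on_def)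
    moreover have "(\<lambda>c. {c}) ` {..<m} \<subseteq> D" using t1 by (auto simp: D_def)
    ultimately have "card {..<m} \<le> card D" by (rule card_inj_on_le[OF _ _ finD])
    then show ?thesis unfolding n_def by simp
  qed
  have n1: "n \<ge> 1" using mn m0 by linarith
  have hD: "\<And>i. i < n \<Longrightarrow> h i \<subseteq> {..<m} \<and> card (h i) \<le> t"
    using h unfolding bij_betw_def D_def by auto
  define R where "R = (\<lambda>i c. if i < n \<and> c \<in> h i then 1 else (0::real))"
  have pR: "payoff_matrix n R" unfolding payoff_matrix_def R_def by auto
  define x where "x = g_r n R"
  have C0: "payoff_matrix n (\<lambda>i j. 0)" unfolding payoff_matrix_def by auto
  have mx: "mixed_strategy n x" using H[OF n1 pR C0] x_def by blast
  have x0: "\<And>i. 0 \<le> x i" and xs: "(\<Sum>i<n. x i) = 1" using mx unfolding mixed_strategy_def by auto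
  define w where "w = (\<lambda>c. \<Sum>i<n. x i * R i c)"
  have w0: "\<And>c. 0 \<le> w c" unfolding w_def R_def using x0 by (auto intro: sum_nonneg)
  have w1: "\<And>c. w c \<le> 1"
  proof -
    fix c have "w c \<le> (\<Sum>i<n. x i)" unfolding w_def R_def using x0 by (intro sum_mono) auto
    then show "w c \<le> 1" using xs by simp
  qed
  have wm: "\<And>c. c \<ge> m \<Longrightarrow> w c = 0"
  proof -
    fix c assume "c \<ge> m"
    then have "\<And>i. i < n \<Longrightarrow> c \<notin> h i" using hD by fastforce
    then show "w c = 0" unfolding w_def R_def by (intro sum.neutral) auto
  qed
  have wsum: "(\<Sum>c<m. w c) \<le> real t"
  proof -
    have "(\<Sum>c<m. w c) = (\<Sum>i<n. x i * (\<Sum>c<m. R i c))"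
      unfolding w_def by (simp add: sum.swap[of _ "{..<m}"] sum_distrib_left)
    also have "\<dots> \<le> (\<Sum>i<n. x i * real t)"
    proof (intro sum_mono mult_left_mono)
      fix i assume "i \<in> {..<n}"
      then have "(\<Sum>c<m. R i c) = real (card (h i))"
        unfolding R_def using hD sum_ind_card[of "h i" "{..<m}"] by simp
      then show "(\<Sum>c<m. R i c) \<le> real t" using hD \<open>i \<in> {..<n}\<close> by simp
    qed (use x0 in auto)
    also have "\<dots> = real t" using xs by (simp add: sum_distrib_right[symmetric])
    finally show ?thesis .
  qed
  obtain k where k: "k < m" "w k \<le> real t / real m"
  proof (rule ccontr)
    assume "\<not> thesis"
    then have "\<forall>k<m. real t / real m < w k" using that by force
    then have "(\<Sum>c<m. real t / real m) < (\<Sum>c<m. w c)"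
      using m0 by (intro sum_strict_mono) auto
    then show False using wsum m0 by simp
  qed
  have kn: "k < n" using k mn by simp
  define C where "C = (\<lambda>(i::nat) j. if j = k then 1 else (0::real))"
  have pC: "payoff_matrix n C" unfolding payoff_matrix_def C_def by auto
  define y where "y = g_c n R C"
  have Hy: "mixed_strategy n y" "approx_NE \<epsilon> n R C x y" using H[OF n1 pR pC] x_def y_def by auto
  have y0: "\<And>i. 0 \<le> y i" and ys: "(\<Sum>i<n. y i) = 1" using Hy(1) unfolding mixed_strategy_def by auto
  have colc: "payoff n x C (pure k) \<le> payoff n x C y + \<epsilon>"
    and rowc: "\<And>i. i < n \<Longrightarrow> payoff n (pure i) R y \<le> payoff n x R y + \<epsilon>"
    using Hy(2) kn unfolding approx_NE_def by auto
  have "payoff n x C (pure k) = 1" using kn xs by (simp add: payoff_pure_right C_def)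
  moreover have "payoff n x C y = y k"
  proof -
    have "payoff n x C y = (\<Sum>i<n. x i * y k)"
      unfolding payoff_def C_def
    proof (intro sum.cong refl)
      fix i show "(\<Sum>j<n. x i * (if j = k then 1 else 0) * y j) = x i * y k"
      proof -
        have "(\<Sum>j<n. x i * (if j = k then 1 else 0) * y j) = (\<Sum>j<n. if j = k then x i * y k else 0)"
          by (intro sum.cong) auto
        then show ?thesis using kn by simp
      qed
    qed
    also have "\<dots> = y k" using xs by (simp add: sum_distrib_right[symmetric])
    finally show ?thesis .
  qed
  ultimately have yk: "1 - \<epsilon> \<le> y k" using colc by simp
  define A where "A = {..<m} - {k}"
  obtain T \<beta> where T: "T \<subseteq> A" "card T \<le> t - 1" "0 \<le> \<beta>" "\<forall>a\<in>T. \<beta> \<le> y a" "\<forall>b\<in>A-T. y b \<le> \<beta>"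
     "real (t - 1 + 1) * (\<beta> * (real (t - 1 + 1) - real (card T))) \<le> sum y A"
    using top_set[of A y "t - 1"] y0 unfolding A_def by auto
  have tt: "real (t - 1 + 1) = real t" using t1 by simp
  have finA: "finite A" unfolding A_def by simp
  have finT: "finite T" using T(1) finA finite_subset by blast
  have kT: "k \<notin> T" using T(1) A_def by auto
  have sumA: "sum y A \<le> 1 - y k"
  proof -
    have "sum y A \<le> (\<Sum>c\<in>{..<n}-{k}. y c)" unfolding A_def using mn y0 by (intro sum_mono2) auto
    also have "\<dots> = 1 - y k" using ys kn by (simp add: sum_diff1)
    finally show ?thesis .
  qed
  have bnd: "\<beta> * (real t - real (card T)) \<le> \<epsilon> / real t"
  proof -
    have "real t * (\<beta> * (real t - real (card T))) \<le> \<epsilon>" using T(6) tt sumA yk by simp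
    then show ?thesis using t0 by (simp add: field_simps)
  qed
  define S0 where "S0 = insert k T"
  have S0D: "S0 \<in> D" unfolding S0_def D_def using T(1,2) k finT t1 A_def
    by (auto simp: card_insert_if)
  define i0 where "i0 = inv_into {0..<n} h S0"
  have i0: "i0 < n" "h i0 = S0"
    using S0D h unfolding i0_def bij_betw_def
    by (auto intro: inv_into_into f_inv_into_f)
  have lhs: "payoff n (pure i0) R y = y k + sum y T"
  proof -
    have "payoff n (pure i0) R y = (\<Sum>c<n. (if c \<in> S0 then y c else 0))"
      using i0 by (simp add: payoff_pure_left R_def) (intro sum.cong, auto)
    also have "\<dots> = sum y S0"
      using S0D mn unfolding D_def by (subst sum.If_cases) (auto intro!: arg_cong2[where f=sum])
    also have "\<dots> = y k + sum y T" unfolding S0_def using kT finT by simp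
    finally show ?thesis .
  qed
  have rhs: "payoff n x R y = w k * y k + (\<Sum>c\<in>A. w c * y c)"
  proof -
    have "payoff n x R y = (\<Sum>c<n. w c * y c)"
      unfolding payoff_def w_def sum_distrib_right by (rule sum.swap)
    also have "\<dots> = (\<Sum>c<m. w c * y c)"
      using mn wm by (intro sum.mono_neutral_right) auto
    also have "\<dots> = w k * y k + (\<Sum>c\<in>A. w c * y c)"
      unfolding A_def using k by (simp add: sum.remove)
    finally show ?thesis .
  qed
  have split: "(\<Sum>c\<in>A. w c * y c) \<le> sum y T + \<beta> * (real t - real (card T))"
  proof -
    have e1: "(\<Sum>c\<in>A. w c * y c) = (\<Sum>c\<in>T. w c * y c) + (\<Sum>c\<in>A-T. w c * y c)"
      using T(1) finA by (simp add: sum.subset_diff)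
    have e2: "(\<Sum>c\<in>A-T. w c * y c) \<le> \<beta> * (\<Sum>c\<in>A-T. w c)"
      unfolding sum_distrib_left using T(5) w0 by (intro sum_mono) (simp add: mult.commute[of \<beta>] mult_left_mono)
    have "(\<Sum>c\<in>A. w c) \<le> (\<Sum>c<m. w c)" unfolding A_def using w0 by (intro sum_mono2) auto
    then have e3: "(\<Sum>c\<in>A-T. w c) \<le> real t - (\<Sum>c\<in>T. w c)"
      using wsum T(1) finA by (simp add: sum.subset_diff)
    have e4: "(\<Sum>c\<in>T. w c * y c) + \<beta> * (real t - (\<Sum>c\<in>T. w c))
       = \<beta> * real t + (\<Sum>c\<in>T. w c * (y c - \<beta>))"
      by (simp add: algebra_simps sum_subtractf sum_distrib_left sum_distrib_right)
    have e5: "(\<Sum>c\<in>T. w c * (y c - \<beta>)) \<le> (\<Sum>c\<in>T. (y c - \<beta>))"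
      using T(4) w1 w0 by (intro sum_mono) (simp add: mult_left_le_one_le)
    have e6: "(\<Sum>c\<in>T. (y c - \<beta>)) = sum y T - \<beta> * real (card T)"
      by (simp add: sum_subtractf)
    have "\<beta> * (\<Sum>c\<in>A-T. w c) \<le> \<beta> * (real t - (\<Sum>c\<in>T. w c))"
      using e3 T(3) by (simp add: mult_left_mono)
    then show ?thesis using e1 e2 e4 e5 e6 by (simp add: algebra_simps)
  qed
  have "y k + sum y T \<le> w k * y k + sum y T + \<epsilon> / real t + \<epsilon>"
    using rowc[OF i0(1)] lhs rhs split bnd by linarith
  moreover have "w k * y k \<le> real t / real m"
  proof -
    have "y k \<le> 1" using ys y0 kn
      by (metis finite_lessThan lessThan_iff member_le_sum)
    then have "w k * y k \<le> w k" using w0 y0 by (simp add: mult_left_le)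
    then show ?thesis using k by simp
  qed
  ultimately have "1 - \<epsilon> \<le> real t / real m + \<epsilon> / real t + \<epsilon>" using yk by linarith
  then show False using tm et a_def assms by linarith
qed

end
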